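(* In the unramified minimax setting below, with $\Sigma_{m,n}=\mathrm{diag}(\varpi_\mathrm{F}^{(m+1)(n-1)},\varpi_\mathrm{F}^{(m+1)(n-2)},\dots,\varpi_\mathrm{F}^{m+1},1)$ and $\mathrm{K}':=\Sigma_{m,n}\mathrm{K}_n(n(m+1))\Sigma_{m,n}^{-1}$, we have: (1) $\mathrm{H}^1\cap\mathrm{K}'=\mathrm{U}^{\lfloor m/2\rfloor+1}\cap\mathrm{K}'$; (2) $(\mathrm{U}_n\cap\mathrm{J}^1)\mathrm{H}^1\cap\mathrm{K}'=(\mathrm{U}_n\cap\mathrm{U}^{\lfloor (m+1)/2\rfloor})\mathrm{U}^{\lfloor m/2\rfloor+1}\cap\mathrm{K}'$; (3) $\mathbf{J}\cap\mathrm{K}'=\mathrm{J}^1\cap\mathrm{K}'$.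
   Context: $\mathrm{F}$ non-archimedean local field, $\mathfrak{o}_\mathrm{F}$, $\mathfrak{p}_\mathrm{F}=\varpi_\mathrm{F}\mathfrak{o}_\mathrm{F}$, residue field $k_\mathrm{F}$; $n\geqslant2$. $\mathrm{K}_n=\mathrm{GL}_n(\mathfrak{o}_\mathrm{F})$, $\mathrm{K}_n(N)=\{\left(\begin{smallmatrix}a&b\\c&d\end{smallmatrix}\right)\in\mathrm{K}_n: c\in\mathrm{M}_{1\times(n-1)}(\mathfrak{p}_\mathrm{F}^N),\ d\in1+\mathfrak{p}_\mathrm{F}^N\}$. $\mathrm{U}_n$: upper unitriangular subgroup of $\mathrm{GL}_n(\mathrm{F})$. Unramified minimax setting: $m\geqslant1$ is an integer, $\mathrm{E}/\mathrm{F}$ an unramified extension of degree $n$ and $\beta\in\mathrm{E}$ with $\mathrm{E}=\mathrm{F}[\beta]$, $\nu_\mathrm{E}(\beta)=-m$, and $\varpi_\mathrm{F}^m\beta+\mathfrak{p}_\mathrm{E}$ generating $k_\mathrm{E}$ over $k_\mathrm{F}$. Let $X^n+a_{n-1}X^{n-1}+\dots+a_0$ be the minimal polynomial of $\beta$. Identify $\mathrm{E}$ with $\mathrm{F}^n$ via the basis $\{\varpi_\mathrm{F}^{km}\beta^k:0\leqslant k\leqslant n-1\}$, so $\mathrm{E}\subset\mathrm{M}_n(\mathrm{F})$, $\mathfrak{o}_\mathrm{E}\subset\mathrm{M}_n(\mathfrak{o}_\mathrm{F})$, $\mathfrak{p}_\mathrm{E}=\varpi_\mathrm{F}\mathfrak{o}_\mathrm{E}$,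 and $$\beta=\begin{pmatrix}&&&-\varpi_\mathrm{F}^{(n-1)m}a_0\\ \varpi_\mathrm{F}^{-m}&&&-\varpi_\mathrm{F}^{(n-2)m}a_1\\ &\ddots&&\vdots\\ &&\varpi_\mathrm{F}^{-m}&-a_{n-1}\end{pmatrix}.$$ For $r\geqslant1$ let $\mathrm{U}^r=1+\mathrm{M}_n(\mathfrak{p}_\mathrm{F}^r)$. Define $\mathrm{H}^1=(1+\mathfrak{p}_\mathrm{E})\mathrm{U}^{\lfloor m/2\rfloor+1}$, $\mathrm{J}^1=(1+\mathfrak{p}_\mathrm{E})\mathrm{U}^{\lfloor (m+1)/2\rfloor}$, and $\mathbf{J}=\mathrm{E}^\times\mathrm{U}^{\lfloor (m+1)/2\rfloor}$. *)

theory Defs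
  imports "Jordan_Normal_Form.Matrix"
begin

text \<open>A normalized discrete valuation on a field, given as a map to the integers on
  nonzero elements (the value at 0 is irrelevant; 0 is treated as having valuation infinity).\<close>
definition discrete_val :: "('a::field \<Rightarrow> int) \<Rightarrow> bool" where
  "discrete_val v \<longleftrightarrow>
     (\<forall>x y. x \<noteq> 0 \<longrightarrow> y \<noteq> 0 \<longrightarrow> v (x * y) = v x + v y) \<and>
     (\<forall>x y. x \<noteq> 0 \<longrightarrow> y \<noteq> 0 \<longrightarrow> x + y \<noteq> 0 \<longrightarrow> min (v x) (v y) \<le> v (x + y)) \<and>
     (\<forall>k. \<exists>x. x \<noteq> 0 \<and> v x = k)"

definition val_ideal :: "('a::field \<Rightarrow> int) \<Rightarrow> int \<Rightarrow> 'a set" where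
  "val_ideal v r = {x. x = 0 \<or> r \<le> v x}"

abbreviation val_ring :: "('a::field \<Rightarrow> int) \<Rightarrow> 'a set" where
  "val_ring v \<equiv> val_ideal v 0"

definition nonarch_local_field :: "('a::field \<Rightarrow> int) \<Rightarrow> bool" where
  "nonarch_local_field v \<longleftrightarrow>
     discrete_val v \<and>
     (\<forall>X :: nat \<Rightarrow> 'a.
        (\<forall>r. \<exists>N. \<forall>i\<ge>N. \<forall>j\<ge>N. X i - X j \<in> val_ideal v r) \<longrightarrow>
        (\<exists>L. \<forall>r. \<exists>N. \<forall>i\<ge>N. X i - L \<in> val_ideal v r)) \<and>
     (\<exists>S. finite S \<and> S \<subseteq> val_ring v \<and>
        (\<forall>x\<in>val_ring v. \<exists>s\<in>S. x - s \<in> val_ideal v 1))"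

definition field_embedding :: "('a::field \<Rightarrow> 'b::field) \<Rightarrow> bool" where
  "field_embedding \<iota> \<longleftrightarrow> \<iota> 1 = 1 \<and> (\<forall>x y. \<iota> (x + y) = \<iota> x + \<iota> y) \<and>
                          (\<forall>x y. \<iota> (x * y) = \<iota> x * \<iota> y)"

text \<open>E (a field type 'b) with valuation w is an unramified extension of F of degree n
  (via the embedding iota), generated by beta with basis 1, beta, ..., beta^(n-1);
  w restricts to v on F (ramification index 1, so w is the normalized valuation of E);
  w beta = -m; and the residue class of varpi^m beta generates k_E over k_F.\<close>
definition unramified_minimax ::
  "('a::field \<Rightarrow> int) \<Rightarrow> 'a \<Rightarrow> ('b::field \<Rightarrow> int) \<Rightarrow> ('a \<Rightarrow> 'b) \<Rightarrow> nat \<Rightarrow> nat \<Rightarrow> 'b \<Rightarrow> bool" where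
  "unramified_minimax v \<omega> w \<iota> n m \<beta> \<longleftrightarrow>
     nonarch_local_field v \<and> \<omega> \<noteq> 0 \<and> v \<omega> = 1 \<and>
     discrete_val w \<and> field_embedding \<iota> \<and> (\<forall>x. x \<noteq> 0 \<longrightarrow> w (\<iota> x) = v x) \<and>
     n \<ge> 2 \<and> m \<ge> 1 \<and>
     (\<forall>y. \<exists>c. y = (\<Sum>k<n. \<iota> (c k) * \<beta> ^ k)) \<and>
     (\<forall>c. (\<Sum>k<n. \<iota> (c k) * \<beta> ^ k) = 0 \<longrightarrow> (\<forall>k<n. c k = 0)) \<and>
     \<beta> \<noteq> 0 \<and> w \<beta> = - int m \<and>
     (\<forall>y\<in>val_ideal w 0. \<exists>(c :: nat \<Rightarrow> 'a) N. (\<forall>k. c k \<in> val_ring v) \<and>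
         y - (\<Sum>k<N. \<iota> (c k) * (\<iota> (\<omega> ^ m) * \<beta>) ^ k) \<in> val_ideal w 1)"

definition E_coords :: "('a::field \<Rightarrow> 'b::field) \<Rightarrow> 'a \<Rightarrow> nat \<Rightarrow> nat \<Rightarrow> 'b \<Rightarrow> 'b \<Rightarrow> nat \<Rightarrow> 'a" where
  "E_coords \<iota> \<omega> n m \<beta> x = (THE c. (\<forall>k\<ge>n. c k = 0) \<and>
        x = (\<Sum>k<n. \<iota> (c k) * \<iota> (\<omega> ^ (k * m)) * \<beta> ^ k))"

definition E_emb :: "('a::field \<Rightarrow> 'b::field) \<Rightarrow> 'a \<Rightarrow> nat \<Rightarrow> nat \<Rightarrow> 'b \<Rightarrow> 'b \<Rightarrow> 'a mat" where
  "E_emb \<iota> \<omega> n m \<beta> x =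
     mat n n (\<lambda>(i, j). E_coords \<iota> \<omega> n m \<beta> (x * \<iota> (\<omega> ^ (j * m)) * \<beta> ^ j) i)"

definition set_mult :: "'a::semiring_0 mat set \<Rightarrow> 'a mat set \<Rightarrow> 'a mat set" where
  "set_mult S T = {A * B | A B. A \<in> S \<and> B \<in> T}"

definition Ucong :: "('a::field \<Rightarrow> int) \<Rightarrow> nat \<Rightarrow> nat \<Rightarrow> 'a mat set" where
  "Ucong v n r = {A \<in> carrier_mat n n.
      \<forall>i<n. \<forall>j<n. (A - 1\<^sub>m n) $$ (i, j) \<in> val_ideal v (int r)}"

definition Uupper :: "nat \<Rightarrow> 'a::field mat set" where
  "Uupper n = {A \<in> carrier_mat n n. \<forall>i<n. A $$ (i, i) = 1 \<and> (\<forall>j<i. A $$ (i, j) = 0)}"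

definition Kmax :: "('a::field \<Rightarrow> int) \<Rightarrow> nat \<Rightarrow> 'a mat set" where
  "Kmax v n = {A \<in> carrier_mat n n. (\<forall>i<n. \<forall>j<n. A $$ (i, j) \<in> val_ring v) \<and>
      (\<exists>B \<in> carrier_mat n n. (\<forall>i<n. \<forall>j<n. B $$ (i, j) \<in> val_ring v) \<and>
         A * B = 1\<^sub>m n \<and> B * A = 1\<^sub>m n)}"

definition Kmirab :: "('a::field \<Rightarrow> int) \<Rightarrow> nat \<Rightarrow> nat \<Rightarrow> 'a mat set" where
  "Kmirab v n N = {A \<in> Kmax v n.
      (\<forall>j<n - 1. A $$ (n - 1, j) \<in> val_ideal v (int N)) \<and>
      A $$ (n - 1, n - 1) - 1 \<in> val_ideal v (int N)}"

definition Sigma_mat :: "'a::field \<Rightarrow> nat \<Rightarrow> nat \<Rightarrow> 'a mat" where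
  "Sigma_mat \<omega> n m = mat n n (\<lambda>(i, j). if i = j then \<omega> ^ ((m + 1) * (n - 1 - i)) else 0)"

definition Sigma_inv :: "'a::field \<Rightarrow> nat \<Rightarrow> nat \<Rightarrow> 'a mat" where
  "Sigma_inv \<omega> n m = mat n n (\<lambda>(i, j). if i = j then inverse (\<omega> ^ ((m + 1) * (n - 1 - i))) else 0)"

definition Kprime :: "('a::field \<Rightarrow> int) \<Rightarrow> 'a \<Rightarrow> nat \<Rightarrow> nat \<Rightarrow> 'a mat set" where
  "Kprime v \<omega> n m = {Sigma_mat \<omega> n m * k * Sigma_inv \<omega> n m | k. k \<in> Kmirab v n (n * (m + 1))}"

definition onepE :: "('b::field \<Rightarrow> int) \<Rightarrow> ('a::field \<Rightarrow> 'b) \<Rightarrow> 'a \<Rightarrow> nat \<Rightarrow> nat \<Rightarrow> 'b \<Rightarrow> 'a mat set" where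
  "onepE w \<iota> \<omega> n m \<beta> = E_emb \<iota> \<omega> n m \<beta> ` {x. x - 1 \<in> val_ideal w 1}"

definition Eunits :: "('a::field \<Rightarrow> 'b::field) \<Rightarrow> 'a \<Rightarrow> nat \<Rightarrow> nat \<Rightarrow> 'b \<Rightarrow> 'a mat set" where
  "Eunits \<iota> \<omega> n m \<beta> = E_emb \<iota> \<omega> n m \<beta> ` {x. x \<noteq> 0}"

definition H1 :: "('a::field \<Rightarrow> int) \<Rightarrow> ('b::field \<Rightarrow> int) \<Rightarrow> ('a \<Rightarrow> 'b) \<Rightarrow> 'a \<Rightarrow> nat \<Rightarrow> nat \<Rightarrow> 'b \<Rightarrow> 'a mat set" where
  "H1 v w \<iota> \<omega> n m \<beta> = set_mult (onepE w \<iota> \<omega> n m \<beta>) (Ucong v n (m div 2 + 1))"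

definition J1 :: "('a::field \<Rightarrow> int) \<Rightarrow> ('b::field \<Rightarrow> int) \<Rightarrow> ('a \<Rightarrow> 'b) \<Rightarrow> 'a \<Rightarrow> nat \<Rightarrow> nat \<Rightarrow> 'b \<Rightarrow> 'a mat set" where
  "J1 v w \<iota> \<omega> n m \<beta> = set_mult (onepE w \<iota> \<omega> n m \<beta>) (Ucong v n ((m + 1) div 2))"

definition Jbold :: "('a::field \<Rightarrow> int) \<Rightarrow> ('a \<Rightarrow> 'b::field) \<Rightarrow> 'a \<Rightarrow> nat \<Rightarrow> nat \<Rightarrow> 'b \<Rightarrow> 'a mat set" where
  "Jbold v \<iota> \<omega> n m \<beta> = set_mult (Eunits \<iota> \<omega> n m \<beta>) (Ucong v n ((m + 1) div 2))"

end

theory Submission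
  imports Defs
begin

section \<open>Valuation basics\<close>

context
  fixes v :: "'a::field \<Rightarrow> int"
  assumes dv: "discrete_val v"
begin

lemma dv_mult: "x \<noteq> 0 \<Longrightarrow> y \<noteq> 0 \<Longrightarrow> v (x * y) = v x + v y"
  using dv unfolding discrete_val_def by blast

lemma dv_one: "v 1 = 0"
  using dv_mult[of 1 1] by simp

lemma dv_minus_one: "v (-1) = 0"
  using dv_mult[of "-1" "-1"] dv_one by simp

lemma dv_minus: "x \<noteq> 0 \<Longrightarrow> v (- x) = v x"
  using dv_mult[of "-1" x] dv_minus_one by simp

lemma dv_inverse: "x \<noteq> 0 \<Longrightarrow> v (inverse x) = - v x"
  using dv_mult[of x "inverse x"] dv_one by simp

lemma dv_power: "x \<noteq> 0 \<Longrightarrow> v (x ^ k) = int k * v x"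
  by (induction k) (auto simp: dv_one dv_mult algebra_simps)

lemma dv_surj: "\<exists>x. x \<noteq> 0 \<and> v x = k"
  using dv unfolding discrete_val_def by blast

lemma vi_zero[simp]: "0 \<in> val_ideal v r"
  by (simp add: val_ideal_def)

lemma vi_iff: "x \<noteq> 0 \<Longrightarrow> x \<in> val_ideal v r \<longleftrightarrow> r \<le> v x"
  by (simp add: val_ideal_def)

lemma vi_add: "a \<in> val_ideal v r \<Longrightarrow> b \<in> val_ideal v r \<Longrightarrow> a + b \<in> val_ideal v r"
proof -
  assume a: "a \<in> val_ideal v r" and b: "b \<in> val_ideal v r"
  show ?thesis
  proof (cases "a = 0 \<or> b = 0 \<or> a + b = 0")
    case True then show ?thesis using a b by (auto simp: val_ideal_def)
  next
    case False
    then have "min (v a) (v b) \<le> v (a + b)" using dv unfolding discrete_val_def by blast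
    then show ?thesis using a b False by (auto simp: val_ideal_def)
  qed
qed

lemma vi_uminus: "a \<in> val_ideal v r \<Longrightarrow> - a \<in> val_ideal v r"
  by (cases "a = 0") (auto simp: val_ideal_def dv_minus)

lemma vi_diff: "a \<in> val_ideal v r \<Longrightarrow> b \<in> val_ideal v r \<Longrightarrow> a - b \<in> val_ideal v r"
  using vi_add[of a r "-b"] vi_uminus[of b r] by simp

lemma vi_mult: "a \<in> val_ideal v r \<Longrightarrow> b \<in> val_ideal v s \<Longrightarrow> a * b \<in> val_ideal v (r + s)"
  by (cases "a = 0 \<or> b = 0") (auto simp: val_ideal_def dv_mult)

lemma vi_mono: "r \<le> s \<Longrightarrow> a \<in> val_ideal v s \<Longrightarrow> a \<in> val_ideal v r"
  by (auto simp: val_ideal_def)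

lemma vi_mult0: "a \<in> val_ideal v 0 \<Longrightarrow> b \<in> val_ideal v s \<Longrightarrow> a * b \<in> val_ideal v s"
  using vi_mult[of a 0 b s] by simp

lemma vi_mult0': "a \<in> val_ideal v s \<Longrightarrow> b \<in> val_ideal v 0 \<Longrightarrow> a * b \<in> val_ideal v s"
  using vi_mult[of a s b 0] by simp

lemma vi_sum: "finite A \<Longrightarrow> (\<And>i. i \<in> A \<Longrightarrow> f i \<in> val_ideal v r) \<Longrightarrow> sum f A \<in> val_ideal v r"
  by (induction A rule: finite_induct) (auto intro: vi_add)

lemma vi_one_not: "1 \<le> r \<Longrightarrow> (1::'a) \<notin> val_ideal v r"
  by (simp add: val_ideal_def dv_one)

lemma vi_one0: "(1::'a) \<in> val_ideal v 0"
  by (simp add: val_ideal_def dv_one)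

lemma vi_all_zero: "(\<And>r. x \<in> val_ideal v r) \<Longrightarrow> x = 0"
proof (rule ccontr)
  assume h: "\<And>r. x \<in> val_ideal v r" and "x \<noteq> 0"
  then have "v x + 1 \<le> v x" using vi_iff[of x "v x + 1"] by blast
  then show False by simp
qed

end



lemma ex_uniform_N:
  "(\<forall>k<(d::nat). \<exists>N::nat. \<forall>i\<ge>N. P k i) \<Longrightarrow> \<exists>N. \<forall>k<d. \<forall>i\<ge>N. P k i"
proof (induction d)
  case 0 then show ?case by auto
next
  case (Suc d)
  then obtain N1 where N1: "\<forall>k<d. \<forall>i\<ge>N1. P k i" by auto
  from Suc.prems obtain N2 where N2: "\<forall>i\<ge>N2. P d i" by auto
  show ?case
    by (rule exI[of _ "max N1 N2"]) (metis N1 N2 less_Suc_eq max.boundedE)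
qed

locale UM =
  fixes v :: "'a::field \<Rightarrow> int" and \<omega> :: 'a and w :: "'b::field \<Rightarrow> int"
    and \<iota> :: "'a \<Rightarrow> 'b" and n m :: nat and \<beta> :: 'b
  assumes UM: "unramified_minimax v \<omega> w \<iota> n m \<beta>"
begin

lemma dvv: "discrete_val v" using UM
  by (simp add: unramified_minimax_def nonarch_local_field_def)
lemma dvw: "discrete_val w" using UM by (simp add: unramified_minimax_def)
lemma om_nz: "\<omega> \<noteq> 0" using UM by (simp add: unramified_minimax_def)
lemma v_om: "v \<omega> = 1" using UM by (simp add: unramified_minimax_def)
lemma emb: "field_embedding \<iota>" using UM by (simp add: unramified_minimax_def)
lemma w_iota: "x \<noteq> 0 \<Longrightarrow> w (\<iota> x) = v x" using UM by (simp add: unramified_minimax_def)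
lemma n2: "n \<ge> 2" using UM by (simp add: unramified_minimax_def)
lemma m1: "m \<ge> 1" using UM by (simp add: unramified_minimax_def)
lemma span: "\<exists>c. y = (\<Sum>k<n. \<iota> (c k) * \<beta> ^ k)" using UM by (simp add: unramified_minimax_def)
lemma indep: "(\<Sum>k<n. \<iota> (c k) * \<beta> ^ k) = 0 \<Longrightarrow> k < n \<Longrightarrow> c k = 0"
  using UM by (simp add: unramified_minimax_def)
lemma beta_nz: "\<beta> \<noteq> 0" using UM by (simp add: unramified_minimax_def)
lemma w_beta: "w \<beta> = - int m" using UM by (simp add: unramified_minimax_def)
lemma resgen: "y \<in> val_ideal w 0 \<Longrightarrow> \<exists>(c :: nat \<Rightarrow> 'a) N. (\<forall>k. c k \<in> val_ring v) \<and>
         y - (\<Sum>k<N. \<iota> (c k) * (\<iota> (\<omega> ^ m) * \<beta>) ^ k) \<in> val_ideal w 1"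
  using UM by (simp add: unramified_minimax_def)
lemma complete: fixes X :: "nat \<Rightarrow> 'a" assumes "(\<forall>r. \<exists>N. \<forall>i\<ge>N. \<forall>j\<ge>N. X i - X j \<in> val_ideal v r)"
  shows "(\<exists>L. \<forall>r. \<exists>N. \<forall>i\<ge>N. X i - L \<in> val_ideal v r)"
proof -
  have H: "\<forall>X::nat \<Rightarrow> 'a. (\<forall>r. \<exists>N. \<forall>i\<ge>N. \<forall>j\<ge>N. X i - X j \<in> val_ideal v r) \<longrightarrow>
        (\<exists>L. \<forall>r. \<exists>N. \<forall>i\<ge>N. X i - L \<in> val_ideal v r)"
    using UM by (simp add: unramified_minimax_def nonarch_local_field_def)
  show ?thesis using H assms by blast
qed

lemma i_1[simp]: "\<iota> 1 = 1" using emb by (simp add: field_embedding_def)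
lemma i_add[simp]: "\<iota> (x + y) = \<iota> x + \<iota> y" using emb by (simp add: field_embedding_def)
lemma i_mult[simp]: "\<iota> (x * y) = \<iota> x * \<iota> y" using emb by (simp add: field_embedding_def)
lemma i_0[simp]: "\<iota> 0 = 0" using i_add[of 0 0] by (metis add_cancel_left_right add_0)
lemma i_uminus[simp]: "\<iota> (- x) = - \<iota> x" using i_add[of x "-x"] by (simp add: eq_neg_iff_add_eq_0 add.commute)
lemma i_diff[simp]: "\<iota> (x - y) = \<iota> x - \<iota> y" using i_add[of x "-y"] by simp
lemma i_power[simp]: "\<iota> (x ^ k) = \<iota> x ^ k" by (induction k) auto
lemma i_sum[simp]: "\<iota> (sum f A) = sum (\<lambda>i. \<iota> (f i)) A"
  by (induction A rule: infinite_finite_induct) auto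
lemma i_nz: "x \<noteq> 0 \<Longrightarrow> \<iota> x \<noteq> 0"
  using i_mult[of x "inverse x"] by auto
lemma i_vi: "\<iota> x \<in> val_ideal w r \<longleftrightarrow> x \<in> val_ideal v r"
  by (cases "x = 0") (auto simp: val_ideal_def w_iota i_nz)

definition \<alpha> where "\<alpha> = \<iota> (\<omega> ^ m) * \<beta>"

lemma alpha_nz: "\<alpha> \<noteq> 0"
  by (simp add: \<alpha>_def i_nz om_nz beta_nz del: i_power)

lemma w_alpha: "w \<alpha> = 0"
proof -
  have "w (\<iota> (\<omega> ^ m)) = int m" using w_iota[of "\<omega>^m"] om_nz dv_power[OF dvv, of \<omega> m] v_om by simp
  then show ?thesis unfolding \<alpha>_def
    using dv_mult[OF dvw, of "\<iota> (\<omega> ^ m)" \<beta>] i_nz[of "\<omega>^m"] om_nz beta_nz w_beta by (simp del: i_power)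
qed

lemma alpha_pow_nz: "\<alpha> ^ k \<noteq> 0" using alpha_nz by simp
lemma w_alpha_pow: "w (\<alpha> ^ k) = 0" using dv_power[OF dvw alpha_nz] w_alpha by simp
lemma alpha_pow_vi: "\<alpha> ^ k \<in> val_ideal w 0" using vi_iff[OF dvw alpha_pow_nz] w_alpha_pow by simp

lemma basis_eq: "\<iota> (\<omega> ^ (k * m)) * \<beta> ^ k = \<alpha> ^ k"
  by (simp add: \<alpha>_def power_mult_distrib power_mult[symmetric] mult.commute)

lemma term_eq: "\<iota> c * \<alpha> ^ k = \<iota> (c * \<omega> ^ (k * m)) * \<beta> ^ k"
  using basis_eq[of k] by (simp add: mult.assoc del: i_power)

lemma indep_a: "(\<Sum>k<n. \<iota> (c k) * \<alpha> ^ k) = 0 \<Longrightarrow> k < n \<Longrightarrow> c k = 0"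
proof -
  assume h: "(\<Sum>k<n. \<iota> (c k) * \<alpha> ^ k) = 0" and k: "k < n"
  have "(\<Sum>k<n. \<iota> (c k * \<omega> ^ (k * m)) * \<beta> ^ k) = 0" using h by (simp only: term_eq)
  from indep[OF this k] show ?thesis using om_nz by simp
qed

lemma span_a: "\<exists>c. y = (\<Sum>k<n. \<iota> (c k) * \<alpha> ^ k)"
proof -
  obtain c where c: "y = (\<Sum>k<n. \<iota> (c k) * \<beta> ^ k)" using span by blast
  have "y = (\<Sum>k<n. \<iota> (c k / \<omega> ^ (k * m)) * \<alpha> ^ k)"
    unfolding c term_eq using om_nz by simp
  then show ?thesis by (rule exI[of _ "\<lambda>k. c k / \<omega> ^ (k * m)"])
qed

lemma resgen_a: "y \<in> val_ideal w 0 \<Longrightarrow> \<exists>(c :: nat \<Rightarrow> 'a) N. (\<forall>k. c k \<in> val_ring v) \<and>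
         y - (\<Sum>k<N. \<iota> (c k) * \<alpha> ^ k) \<in> val_ideal w 1"
  using resgen unfolding \<alpha>_def .

lemma i_om_nz: "\<iota> \<omega> \<noteq> 0" using i_nz om_nz by blast
lemma w_i_om: "w (\<iota> \<omega>) = 1" using w_iota om_nz v_om by simp

lemma vi_v_om_pow: "\<omega> ^ k \<in> val_ideal v (int k)"
  using vi_iff[OF dvv, of "\<omega>^k"] om_nz dv_power[OF dvv om_nz, of k] v_om by simp

lemma sum_vi: "(\<And>k. k < N \<Longrightarrow> c k \<in> val_ideal v r) \<Longrightarrow> (\<Sum>k<N. \<iota> (c k) * \<alpha> ^ k) \<in> val_ideal w r"
  by (rule vi_sum[OF dvw]) (auto intro!: vi_mult0'[OF dvw] simp: i_vi alpha_pow_vi)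

end


lemma val_ideal_0[simp]: "0 \<in> val_ideal v r" by (simp add: val_ideal_def)

context UM begin

lemma sum_ind: "j < N \<Longrightarrow> (\<Sum>k<N. \<iota> (if k = j then 1 else 0) * \<alpha> ^ k) = \<alpha> ^ j"
proof -
  assume "j < N"
  have "(\<Sum>k<N. \<iota> (if k = j then 1 else 0) * \<alpha> ^ k) = (\<Sum>k<N. if k = j then \<alpha> ^ j else 0)"
    by (rule sum.cong) auto
  also have "\<dots> = \<alpha> ^ j" using \<open>j < N\<close> by simp
  finally show ?thesis .
qed

lemma i_vi0: "x \<in> val_ideal v 0 \<Longrightarrow> \<iota> x \<in> val_ideal w 0" by (simp add: i_vi)

lemma red_lemma:
  assumes rel: "\<alpha>^d - (\<Sum>k<d. \<iota> (b k) * \<alpha>^k) \<in> val_ideal w 1"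
    and b0: "\<forall>k. b k \<in> val_ideal v 0"
  shows "\<exists>bb. (\<forall>k. bb k \<in> val_ideal v 0) \<and> \<alpha>^j - (\<Sum>k<d. \<iota> (bb k) * \<alpha>^k) \<in> val_ideal w 1"
proof (induction j)
  case 0
  show ?case
  proof (cases "d = 0")
    case True then show ?thesis using rel b0 by auto
  next
    case False
    then have "(\<Sum>k<d. \<iota> (if k = 0 then 1 else 0) * \<alpha> ^ k) = \<alpha> ^ 0" by (intro sum_ind) auto
    then show ?thesis
      by (intro exI[of _ "\<lambda>k. if k = 0 then 1 else 0"]) (auto simp: vi_one0[OF dvv])
  qed
next
  case (Suc j)
  then obtain bb where bb0: "\<forall>k. bb k \<in> val_ideal v 0"
    and bb: "\<alpha>^j - (\<Sum>k<d. \<iota> (bb k) * \<alpha>^k) \<in> val_ideal w 1" by blast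
  have m1: "\<alpha> * (\<alpha>^j - (\<Sum>k<d. \<iota> (bb k) * \<alpha>^k)) \<in> val_ideal w 1"
    using vi_mult0[OF dvw alpha_pow_vi[of 1] bb] by simp
  have e1: "\<alpha> * (\<alpha>^j - (\<Sum>k<d. \<iota> (bb k) * \<alpha>^k)) = \<alpha>^Suc j - (\<Sum>k<d. \<iota> (bb k) * \<alpha>^Suc k)"
    by (simp add: right_diff_distrib sum_distrib_left mult.left_commute)
  show ?case
  proof (cases d)
    case 0
    then show ?thesis using m1 e1 bb0 by auto
  next
    case (Suc d')
    define g where "g k = (if k = 0 then 0 else bb (k - 1))" for k
    define bb' where "bb' k = g k + bb d' * b k" for k
    have g_sum: "(\<Sum>k<d. \<iota> (g k) * \<alpha>^k) = (\<Sum>k<d'. \<iota> (bb k) * \<alpha>^Suc k)"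
      unfolding Suc by (subst sum.lessThan_Suc_shift) (simp add: g_def)
    have split: "(\<Sum>k<d. \<iota> (bb k) * \<alpha>^Suc k) = (\<Sum>k<d'. \<iota> (bb k) * \<alpha>^Suc k) + \<iota> (bb d') * \<alpha>^d"
      unfolding Suc by simp
    have bb'_sum: "(\<Sum>k<d. \<iota> (bb' k) * \<alpha>^k) = (\<Sum>k<d'. \<iota> (bb k) * \<alpha>^Suc k) + \<iota> (bb d') * (\<Sum>k<d. \<iota> (b k) * \<alpha>^k)"
      unfolding bb'_def g_sum[symmetric]
      by (simp add: distrib_right sum.distrib sum_distrib_left mult.assoc)
    have eq: "\<alpha>^Suc j - (\<Sum>k<d. \<iota> (bb' k) * \<alpha>^k) =
        (\<alpha>^Suc j - (\<Sum>k<d. \<iota> (bb k) * \<alpha>^Suc k)) + \<iota> (bb d') * (\<alpha>^d - (\<Sum>k<d. \<iota> (b k) * \<alpha>^k))"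
      unfolding bb'_sum split by (simp add: algebra_simps)
    have "\<alpha>^Suc j - (\<Sum>k<d. \<iota> (bb' k) * \<alpha>^k) \<in> val_ideal w 1"
      unfolding eq
      apply (rule vi_add[OF dvw])
      using m1 e1 apply simp
      by (rule vi_mult0[OF dvw i_vi0[OF bb0[rule_format]] rel])
    moreover have "\<forall>k. bb' k \<in> val_ideal v 0"
      unfolding bb'_def g_def using bb0 b0
      by (auto intro!: vi_add[OF dvv] vi_mult0[OF dvv])
    ultimately show ?thesis by blast
  qed
qed

lemma stepA_lemma:
  assumes red: "\<And>j. \<exists>bb. (\<forall>k. bb k \<in> val_ideal v 0) \<and> \<alpha>^j - (\<Sum>k<d. \<iota> (bb k) * \<alpha>^k) \<in> val_ideal w 1"
    and y: "y \<in> val_ideal w 0"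
  shows "\<exists>bb. (\<forall>k. bb k \<in> val_ideal v 0) \<and> y - (\<Sum>k<d. \<iota> (bb k) * \<alpha>^k) \<in> val_ideal w 1"
proof -
  obtain c N where c0: "\<forall>k. c k \<in> val_ideal v 0" and c: "y - (\<Sum>j<N. \<iota> (c j) * \<alpha> ^ j) \<in> val_ideal w 1"
    using resgen_a[OF y] by blast
  obtain B where B: "\<And>j. (\<forall>k. B j k \<in> val_ideal v 0) \<and> \<alpha>^j - (\<Sum>k<d. \<iota> (B j k) * \<alpha>^k) \<in> val_ideal w 1"
    using red by metis
  define bb where "bb k = (\<Sum>j<N. c j * B j k)" for k
  have sw: "(\<Sum>k<d. \<iota> (bb k) * \<alpha>^k) = (\<Sum>j<N. \<iota> (c j) * (\<Sum>k<d. \<iota> (B j k) * \<alpha>^k))"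
    unfolding bb_def by (simp add: sum_distrib_left sum_distrib_right mult.assoc sum.swap[of _ "{..<d}"])
  have eq: "y - (\<Sum>k<d. \<iota> (bb k) * \<alpha>^k) = (y - (\<Sum>j<N. \<iota> (c j) * \<alpha> ^ j)) +
       (\<Sum>j<N. \<iota> (c j) * (\<alpha>^j - (\<Sum>k<d. \<iota> (B j k) * \<alpha>^k)))"
    unfolding sw by (simp add: right_diff_distrib sum_subtractf)
  have "y - (\<Sum>k<d. \<iota> (bb k) * \<alpha>^k) \<in> val_ideal w 1"
    unfolding eq
    by (intro vi_add[OF dvw] c vi_sum[OF dvw] vi_mult0[OF dvw] i_vi0) (use c0 B in auto)
  moreover have "\<forall>k. bb k \<in> val_ideal v 0"
    unfolding bb_def using c0 B by (auto intro!: vi_sum[OF dvv] vi_mult0[OF dvv])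
  ultimately show ?thesis by blast
qed


lemma stepB_lemma:
  assumes stepA: "\<And>y. y \<in> val_ideal w 0 \<Longrightarrow> \<exists>bb. (\<forall>k. bb k \<in> val_ideal v 0) \<and> y - (\<Sum>k<d. \<iota> (bb k) * \<alpha>^k) \<in> val_ideal w 1"
    and y: "y \<in> val_ideal w 0"
  shows "\<exists>B. y = (\<Sum>k<d. \<iota> (B k) * \<alpha>^k)"
proof -
  obtain bs where bs: "\<And>y. y \<in> val_ideal w 0 \<Longrightarrow> (\<forall>k. bs y k \<in> val_ideal v 0) \<and> y - (\<Sum>k<d. \<iota> (bs y k) * \<alpha>^k) \<in> val_ideal w 1"
    using stepA by metis
  define ys where "ys = rec_nat y (\<lambda>i yi. (yi - (\<Sum>k<d. \<iota> (bs yi k) * \<alpha>^k)) * inverse (\<iota> \<omega>))"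
  have ys0: "ys 0 = y" by (simp add: ys_def)
  have ysS: "ys (Suc i) = (ys i - (\<Sum>k<d. \<iota> (bs (ys i) k) * \<alpha>^k)) * inverse (\<iota> \<omega>)" for i
    by (simp add: ys_def)
  have inv_om: "inverse (\<iota> \<omega>) \<in> val_ideal w (-1)"
    using vi_iff[OF dvw, of "inverse (\<iota> \<omega>)"] i_om_nz dv_inverse[OF dvw i_om_nz] w_i_om by simp
  have ysvi: "ys i \<in> val_ideal w 0" for i
  proof (induction i)
    case 0 then show ?case using y ys0 by simp
  next
    case (Suc i)
    show ?case unfolding ysS using vi_mult[OF dvw conjunct2[OF bs[OF Suc]] inv_om] by simp
  qed
  have ys_step: "ys i = (\<Sum>k<d. \<iota> (bs (ys i) k) * \<alpha>^k) + \<iota> \<omega> * ys (Suc i)" for i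
    unfolding ysS using i_om_nz by (simp add: field_simps)
  define S where "S N k = (\<Sum>i<N. \<omega>^i * bs (ys i) k)" for N k
  have decomp: "y = (\<Sum>k<d. \<iota> (S N k) * \<alpha>^k) + \<iota> (\<omega>^N) * ys N" for N
  proof (induction N)
    case 0 then show ?case by (simp add: S_def ys0)
  next
    case (Suc N)
    have "(\<Sum>k<d. \<iota> (S (Suc N) k) * \<alpha>^k) = (\<Sum>k<d. \<iota> (S N k) * \<alpha>^k) + \<iota> (\<omega>^N) * (\<Sum>k<d. \<iota> (bs (ys N) k) * \<alpha>^k)"
      by (simp add: S_def distrib_right sum.distrib sum_distrib_left mult.assoc del: i_power)
    moreover have "\<iota> (\<omega>^N) * ys N = \<iota> (\<omega>^N) * (\<Sum>k<d. \<iota> (bs (ys N) k) * \<alpha>^k) + \<iota> (\<omega>^Suc N) * ys (Suc N)"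
      by (subst ys_step) (simp add: distrib_left mult.assoc)
    ultimately show ?case using Suc by (simp add: algebra_simps)
  qed
  have Sdiff: "S N k - S M k \<in> val_ideal v (int M)" if "M \<le> N" for M N k
  proof -
    have "S N k = S M k + (\<Sum>i\<in>{M..<N}. \<omega>^i * bs (ys i) k)"
      unfolding S_def using that
      by (simp add: lessThan_atLeast0 sum.atLeastLessThan_concat)
    moreover have "(\<Sum>i\<in>{M..<N}. \<omega>^i * bs (ys i) k) \<in> val_ideal v (int M)"
      by (intro vi_sum[OF dvv] vi_mult0'[OF dvv] vi_mono[OF dvv _ vi_v_om_pow] conjunct1[OF bs[OF ysvi], rule_format]) auto
    ultimately show ?thesis by simp
  qed
  have cauchy: "\<forall>r. \<exists>N. \<forall>i\<ge>N. \<forall>j\<ge>N. S i k - S j k \<in> val_ideal v r" for k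
  proof
    fix r
    show "\<exists>N. \<forall>i\<ge>N. \<forall>j\<ge>N. S i k - S j k \<in> val_ideal v r"
    proof (intro exI[of _ "nat r"] allI impI)
      fix i j assume i: "nat r \<le> i" and j: "nat r \<le> j"
      show "S i k - S j k \<in> val_ideal v r"
      proof (cases "j \<le> i")
        case True
        then show ?thesis using vi_mono[OF dvv _ Sdiff[OF True]] j by simp
      next
        case False
        then have "S j k - S i k \<in> val_ideal v r" using vi_mono[OF dvv _ Sdiff[of i j]] i by simp
        then show ?thesis using vi_uminus[OF dvv] by fastforce
      qed
    qed
  qed
  have "\<forall>k. \<exists>L. \<forall>r. \<exists>N. \<forall>i\<ge>N. S i k - L \<in> val_ideal v r"
    using complete[OF cauchy] by blast
  then obtain L where L: "\<And>k r. \<exists>N. \<forall>i\<ge>N. S i k - L k \<in> val_ideal v r" by metis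
  define D where "D = y - (\<Sum>k<d. \<iota> (L k) * \<alpha>^k)"
  have "D \<in> val_ideal w r" for r
  proof -
    obtain N0 where N0: "\<forall>k<d. \<forall>i\<ge>N0. S i k - L k \<in> val_ideal v r"
      using ex_uniform_N[of d "\<lambda>k i. S i k - L k \<in> val_ideal v r"] L by blast
    define N where "N = max N0 (nat r)"
    have "D = (\<Sum>k<d. \<iota> (S N k - L k) * \<alpha>^k) + \<iota> (\<omega>^N) * ys N"
      unfolding D_def by (subst decomp[of N]) (simp add: left_diff_distrib sum_subtractf)
    moreover have "(\<Sum>k<d. \<iota> (S N k - L k) * \<alpha>^k) \<in> val_ideal w r"
      by (rule sum_vi) (use N0 N_def in auto)
    moreover have "\<iota> (\<omega>^N) * ys N \<in> val_ideal w r"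
    proof -
      have "\<iota> (\<omega>^N) \<in> val_ideal w r"
        unfolding i_vi using vi_mono[OF dvv _ vi_v_om_pow[of N]] N_def by simp
      then show ?thesis using vi_mult0'[OF dvw _ ysvi] by blast
    qed
    ultimately show ?thesis using vi_add[OF dvw] by simp
  qed
  then have "D = 0" by (rule vi_all_zero[OF dvw])
  then show ?thesis unfolding D_def by (intro exI[of _ L]) simp
qed

lemma stepAB:
  assumes rel: "\<alpha>^d - (\<Sum>k<d. \<iota> (b k) * \<alpha>^k) \<in> val_ideal w 1"
    and b0: "\<forall>k. b k \<in> val_ideal v 0" and d: "d < n"
  shows False
proof -
  have red: "\<And>j. \<exists>bb. (\<forall>k. bb k \<in> val_ideal v 0) \<and> \<alpha>^j - (\<Sum>k<d. \<iota> (bb k) * \<alpha>^k) \<in> val_ideal w 1"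
    using red_lemma[OF rel b0] by blast
  obtain B where B: "\<alpha>^d = (\<Sum>k<d. \<iota> (B k) * \<alpha>^k)"
    using stepB_lemma[OF stepA_lemma[OF red] alpha_pow_vi] by blast
  define c where "c k = (if k < d then B k else if k = d then -1 else 0)" for k
  have "(\<Sum>k\<in>{0..<Suc d}. \<iota> (c k) * \<alpha>^k) + (\<Sum>k\<in>{Suc d..<n}. \<iota> (c k) * \<alpha>^k) = (\<Sum>k\<in>{0..<n}. \<iota> (c k) * \<alpha>^k)"
    by (rule sum.atLeastLessThan_concat) (use d in auto)
  then have "(\<Sum>k<n. \<iota> (c k) * \<alpha>^k) = (\<Sum>k<Suc d. \<iota> (c k) * \<alpha>^k) + (\<Sum>k\<in>{Suc d..<n}. \<iota> (c k) * \<alpha>^k)"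
    by (simp only: lessThan_atLeast0)
  also have "(\<Sum>k\<in>{Suc d..<n}. \<iota> (c k) * \<alpha>^k) = 0"
    by (rule sum.neutral) (auto simp: c_def)
  also have "(\<Sum>k<Suc d. \<iota> (c k) * \<alpha>^k) = (\<Sum>k<d. \<iota> (B k) * \<alpha>^k) - \<alpha>^d"
    by (simp add: c_def)
  finally have "(\<Sum>k<n. \<iota> (c k) * \<alpha>^k) = 0" using B by simp
  from indep_a[OF this d] show False by (simp add: c_def)
qed

lemma core:
  assumes c0: "\<forall>k<n. c k \<in> val_ideal v 0" and j: "j < n" "c j \<notin> val_ideal v 1"
  shows "(\<Sum>k<n. \<iota> (c k) * \<alpha>^k) \<notin> val_ideal w 1"
proof
  assume S: "(\<Sum>k<n. \<iota> (c k) * \<alpha>^k) \<in> val_ideal w 1"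
  define D where "D = {k. k < n \<and> c k \<notin> val_ideal v 1}"
  have finD: "finite D" unfolding D_def by simp
  have jD: "j \<in> D" unfolding D_def using j by simp
  define d where "d = Max D"
  have dD: "d \<in> D" unfolding d_def using finD jD Max_in by blast
  then have dn: "d < n" and cd1: "c d \<notin> val_ideal v 1" unfolding D_def by auto
  have above: "c k \<in> val_ideal v 1" if "k < n" "d < k" for k
    using Max_ge[OF finD, of k] that unfolding d_def D_def by fastforce
  have cd0: "c d \<in> val_ideal v 0" using c0 dn by simp
  have cdnz: "c d \<noteq> 0" using cd1 by (auto simp: val_ideal_def)
  have vcd: "v (c d) = 0" using cd0 cd1 cdnz by (auto simp: val_ideal_def)
  have icd: "inverse (c d) \<in> val_ideal v 0"
    using vi_iff[OF dvv, of "inverse (c d)"] cdnz dv_inverse[OF dvv cdnz] vcd by simp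
  define b where "b k = (if k < d then - c k / c d else 0)" for k
  have b0: "\<forall>k. b k \<in> val_ideal v 0"
    unfolding b_def divide_inverse using c0 dn icd by (auto intro!: vi_uminus[OF dvv] vi_mult0[OF dvv])
  define f where "f k = \<iota> (c k / c d) * \<alpha>^k" for k
  have T: "(\<Sum>k<n. f k) \<in> val_ideal w 1"
  proof -
    have "\<iota> (inverse (c d)) * (\<Sum>k<n. \<iota> (c k) * \<alpha>^k) \<in> val_ideal w 1"
      using vi_mult0[OF dvw i_vi0[OF icd] S] .
    moreover have "\<iota> (inverse (c d)) * (\<Sum>k<n. \<iota> (c k) * \<alpha>^k) = (\<Sum>k<n. f k)"
      unfolding f_def by (simp add: sum_distrib_left divide_inverse mult.assoc mult.left_commute)
    ultimately show ?thesis by simp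
  qed
  have "(\<Sum>k\<in>{0..<Suc d}. f k) + (\<Sum>k\<in>{Suc d..<n}. f k) = (\<Sum>k\<in>{0..<n}. f k)"
    by (rule sum.atLeastLessThan_concat) (use dn in auto)
  then have "(\<Sum>k<n. f k) = (\<Sum>k<Suc d. f k) + (\<Sum>k\<in>{Suc d..<n}. f k)"
    by (simp only: lessThan_atLeast0)
  moreover have "(\<Sum>k<Suc d. f k) = \<alpha>^d - (\<Sum>k<d. \<iota> (b k) * \<alpha>^k)"
    using cdnz by (simp add: f_def b_def sum_negf[symmetric])
  moreover have "(\<Sum>k\<in>{Suc d..<n}. f k) \<in> val_ideal w 1"
  proof (intro vi_sum[OF dvw])
    fix k assume "k \<in> {Suc d..<n}"
    then have "c k * inverse (c d) \<in> val_ideal v 1" using vi_mult0'[OF dvv above icd] by auto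
    then have "\<iota> (c k * inverse (c d)) \<in> val_ideal w 1" by (simp only: i_vi)
    then show "f k \<in> val_ideal w 1" unfolding f_def divide_inverse using vi_mult0'[OF dvw _ alpha_pow_vi] by blast
  qed simp
  ultimately have "\<alpha>^d - (\<Sum>k<d. \<iota> (b k) * \<alpha>^k) \<in> val_ideal w 1"
    using T vi_diff[OF dvw, of "\<Sum>k<n. f k" 1 "\<Sum>k\<in>{Suc d..<n}. f k"] by simp
  from stepAB[OF this b0 dn] show False .
qed

end


context UM begin

lemma L2:
  assumes S: "(\<Sum>k<n. \<iota> (c k) * \<alpha>^k) \<in> val_ideal w r" and k: "k < n"
  shows "c k \<in> val_ideal v r"
proof (rule ccontr)
  assume nk: "c k \<notin> val_ideal v r"
  define Z where "Z = {k. k < n \<and> c k \<noteq> 0}"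
  have finZ: "finite Z" unfolding Z_def by simp
  have kZ: "k \<in> Z" unfolding Z_def using k nk by auto
  define t where "t = Min ((\<lambda>j. v (c j)) ` Z)"
  have tk: "t \<le> v (c k)" unfolding t_def using finZ kZ by simp
  have tr: "t < r" using tk nk kZ vi_iff[OF dvv, of "c k" r] unfolding Z_def by auto
  have "t \<in> (\<lambda>j. v (c j)) ` Z" unfolding t_def using finZ kZ by (intro Min_in) auto
  then obtain k0 where k0: "k0 \<in> Z" "v (c k0) = t" by auto
  have tle: "t \<le> v (c j)" if "j \<in> Z" for j unfolding t_def using finZ that by simp
  obtain p where p: "p \<noteq> 0" "v p = - t" using dv_surj[OF dvv] by blast
  define c' where "c' j = c j * p" for j
  have c'0: "\<forall>j<n. c' j \<in> val_ideal v 0"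
  proof (intro allI impI)
    fix j assume j: "j < n"
    show "c' j \<in> val_ideal v 0"
    proof (cases "c j = 0")
      case True then show ?thesis by (simp add: c'_def)
    next
      case False
      then have "j \<in> Z" using j unfolding Z_def by simp
      then show ?thesis using tle[of j] False p dv_mult[OF dvv, of "c j" p]
        by (simp add: c'_def val_ideal_def)
    qed
  qed
  have k0n: "k0 < n" and ck0: "c k0 \<noteq> 0" using k0 unfolding Z_def by auto
  have "c' k0 \<notin> val_ideal v 1"
    using k0 p ck0 dv_mult[OF dvv, of "c k0" p] by (simp add: c'_def val_ideal_def)
  from core[OF c'0 k0n this] have nS: "(\<Sum>j<n. \<iota> (c' j) * \<alpha>^j) \<notin> val_ideal w 1" .
  have "(\<Sum>j<n. \<iota> (c' j) * \<alpha>^j) = \<iota> p * (\<Sum>j<n. \<iota> (c j) * \<alpha>^j)"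
    by (simp add: c'_def sum_distrib_left mult_ac)
  moreover have "\<iota> p \<in> val_ideal w (- t)"
    unfolding i_vi using p by (simp add: val_ideal_def)
  ultimately have "(\<Sum>j<n. \<iota> (c' j) * \<alpha>^j) \<in> val_ideal w (- t + r)"
    using vi_mult[OF dvw _ S, of "\<iota> p" "- t"] by simp
  then have "(\<Sum>j<n. \<iota> (c' j) * \<alpha>^j) \<in> val_ideal w 1"
    by (rule vi_mono[OF dvw, rotated]) (use tr in simp)
  with nS show False by contradiction
qed

abbreviation co where "co \<equiv> E_coords \<iota> \<omega> n m \<beta>"
abbreviation emb where "emb \<equiv> E_emb \<iota> \<omega> n m \<beta>"

lemma term_eq2: "\<iota> c * \<iota> (\<omega> ^ (k * m)) * \<beta> ^ k = \<iota> c * \<alpha> ^ k"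
  using basis_eq[of k] by (simp only: mult.assoc)

lemma uniq: "(\<Sum>k<n. \<iota> (c1 k) * \<alpha>^k) = (\<Sum>k<n. \<iota> (c2 k) * \<alpha>^k) \<Longrightarrow> k < n \<Longrightarrow> c1 k = c2 k"
proof -
  assume h: "(\<Sum>k<n. \<iota> (c1 k) * \<alpha>^k) = (\<Sum>k<n. \<iota> (c2 k) * \<alpha>^k)" and k: "k < n"
  have "(\<Sum>k<n. \<iota> (c1 k - c2 k) * \<alpha>^k) = 0"
    using h by (simp add: left_diff_distrib sum_subtractf)
  from indep_a[OF this k] show ?thesis by simp
qed

lemma co_char: "(\<forall>k\<ge>n. co x k = 0) \<and> x = (\<Sum>k<n. \<iota> (co x k) * \<alpha>^k)"
proof -
  define P where "P c \<longleftrightarrow> (\<forall>k\<ge>n. c k = 0) \<and> x = (\<Sum>k<n. \<iota> (c k) * \<iota> (\<omega> ^ (k * m)) * \<beta> ^ k)" for c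
  have P': "P c \<longleftrightarrow> (\<forall>k\<ge>n. c k = 0) \<and> x = (\<Sum>k<n. \<iota> (c k) * \<alpha>^k)" for c
    unfolding P_def term_eq2 ..
  obtain c where c: "x = (\<Sum>k<n. \<iota> (c k) * \<alpha> ^ k)" using span_a by blast
  define c0 where "c0 k = (if k < n then c k else 0)" for k
  have "P c0" unfolding P' c0_def using c by simp
  moreover have "c1 = c2" if "P c1" "P c2" for c1 c2
  proof
    fix k show "c1 k = c2 k"
      using that uniq[of c1 c2 k] unfolding P' by (cases "k < n") auto
  qed
  ultimately have "\<exists>!c. P c" by blast
  from theI'[OF this] have "P (co x)" unfolding E_coords_def P_def .
  then show ?thesis unfolding P' .
qed

lemma co_eq: "x = (\<Sum>k<n. \<iota> (c k) * \<alpha>^k) \<Longrightarrow> k < n \<Longrightarrow> co x k = c k"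
  using uniq[of "co x" c k] co_char[of x] by simp

lemma co_vi: "x \<in> val_ideal w r \<Longrightarrow> k < n \<Longrightarrow> co x k \<in> val_ideal v r"
  using L2[of "co x" r k] co_char[of x] by simp

lemma co_add: "k < n \<Longrightarrow> co (x + y) k = co x k + co y k"
  using co_eq[of "x + y" "\<lambda>k. co x k + co y k" k] co_char[of x] co_char[of y]
  by (simp add: distrib_right sum.distrib)

lemma co_alpha: "j < n \<Longrightarrow> k < n \<Longrightarrow> co (\<alpha>^j) k = (if k = j then 1 else 0)"
  using co_eq[of "\<alpha>^j" "\<lambda>k. if k = j then 1 else 0" k] sum_ind[of j n] by simp

lemma emb_entry: "i < n \<Longrightarrow> j < n \<Longrightarrow> emb x $$ (i, j) = co (x * \<alpha>^j) i"
  unfolding E_emb_def using basis_eq[of j] by (simp add: mult.assoc del: i_power)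

lemma emb_carrier: "emb x \<in> carrier_mat n n"
  unfolding E_emb_def by simp

lemma emb_one: "emb 1 = 1\<^sub>m n"
  by (rule eq_matI) (insert emb_carrier[of 1], auto simp: emb_entry co_alpha)

lemma w_nz_vi: "z \<noteq> 0 \<Longrightarrow> z \<in> val_ideal w (w z)"
  by (simp add: val_ideal_def)

lemma P_lemma:
  assumes z: "z \<noteq> 0"
  shows "\<exists>j<n. co (z * \<alpha>^j) (n-1) \<notin> val_ideal v (w z + 1)"
proof (rule ccontr)
  assume "\<not> ?thesis"
  then have all: "\<forall>j<n. co (z * \<alpha>^j) (n-1) \<in> val_ideal v (w z + 1)" by blast
  have nn: "n - 1 < n" using n2 by simp
  define y where "y = inverse z * \<alpha>^(n-1)"
  have ynz: "y \<noteq> 0" unfolding y_def using z alpha_nz by simp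
  have wy: "w y = - w z" unfolding y_def
    using dv_mult[OF dvw, of "inverse z" "\<alpha>^(n-1)"] z alpha_nz dv_inverse[OF dvw z] w_alpha_pow[of "n-1"] by simp
  define d where "d = co y"
  have yd: "y = (\<Sum>j<n. \<iota> (d j) * \<alpha>^j)" unfolding d_def by (rule conjunct2[OF co_char])
  have d_vi: "d j \<in> val_ideal v (- w z)" if "j < n" for j
    unfolding d_def using co_vi[OF w_nz_vi[OF ynz] that] wy by simp
  have zy: "z * y = \<alpha>^(n-1)" unfolding y_def using z by simp
  have "z * y = (\<Sum>j<n. \<iota> (d j) * (z * \<alpha>^j))"
    unfolding yd by (simp add: sum_distrib_left mult_ac)
  also have "\<dots> = (\<Sum>j<n. \<iota> (d j) * (\<Sum>k<n. \<iota> (co (z * \<alpha>^j) k) * \<alpha>^k))"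
  proof -
    have cz: "\<And>j. z * \<alpha>^j = (\<Sum>k<n. \<iota> (co (z * \<alpha>^j) k) * \<alpha>^k)" by (rule conjunct2[OF co_char])
    show ?thesis by (simp only: cz[symmetric])
  qed
  also have "\<dots> = (\<Sum>j<n. \<Sum>k<n. \<iota> (d j * co (z * \<alpha>^j) k) * \<alpha>^k)"
    by (simp add: sum_distrib_left mult.assoc)
  also have "\<dots> = (\<Sum>k<n. \<Sum>j<n. \<iota> (d j * co (z * \<alpha>^j) k) * \<alpha>^k)"
    by (rule sum.swap)
  also have "\<dots> = (\<Sum>k<n. \<iota> (\<Sum>j<n. d j * co (z * \<alpha>^j) k) * \<alpha>^k)"
    by (simp add: sum_distrib_right mult.assoc)
  finally have "\<alpha>^(n-1) = (\<Sum>k<n. \<iota> (\<Sum>j<n. d j * co (z * \<alpha>^j) k) * \<alpha>^k)"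
    by (simp only: zy)
  from co_eq[OF this nn] have "co (\<alpha>^(n-1)) (n-1) = (\<Sum>j<n. d j * co (z * \<alpha>^j) (n-1))" .
  then have "1 = (\<Sum>j<n. d j * co (z * \<alpha>^j) (n-1))" using co_alpha[OF nn nn] by simp
  moreover have "(\<Sum>j<n. d j * co (z * \<alpha>^j) (n-1)) \<in> val_ideal v 1"
  proof (rule vi_sum[OF dvv])
    fix j assume "j \<in> {..<n}"
    then show "d j * co (z * \<alpha>^j) (n-1) \<in> val_ideal v 1"
      using vi_mult[OF dvv d_vi all[rule_format]] by simp
  qed simp
  ultimately show False using vi_one_not[OF dvv, of 1] by simp
qed

lemma mult_entry: "A \<in> carrier_mat n n \<Longrightarrow> B \<in> carrier_mat n n \<Longrightarrow> i < n \<Longrightarrow> j < n \<Longrightarrow>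
   (A * B) $$ (i, j) = (\<Sum>l<n. A $$ (i, l) * B $$ (l, j))"
  by (simp add: scalar_prod_def lessThan_atLeast0)

lemma G_lemma:
  assumes u: "u \<in> carrier_mat n n" "\<forall>l<n. \<forall>j<n. (u - 1\<^sub>m n) $$ (l, j) \<in> val_ideal v 1"
    and h: "\<forall>j<n. (\<Sum>l<n. co (z * \<alpha>^l) (n-1) * u $$ (l, j)) \<in> val_ideal v q"
  shows "z \<in> val_ideal w q"
proof (cases "z = 0")
  case True then show ?thesis by simp
next
  case False
  note z = False
  show ?thesis
  proof (cases "q \<le> w z")
    case True then show ?thesis using z by (simp add: val_ideal_def)
  next
    case False
    have nn: "n - 1 < n" using n2 by simp
    define \<rho> where "\<rho> l = co (z * \<alpha>^l) (n-1)" for l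
    have \<rho>t: "\<rho> l \<in> val_ideal v (w z)" if "l < n" for l
    proof -
      have "z * \<alpha>^l \<in> val_ideal w (w z)"
        using vi_mult0'[OF dvw w_nz_vi[OF z] alpha_pow_vi] .
      then show ?thesis unfolding \<rho>_def by (rule co_vi[OF _ nn])
    qed
    obtain j0 where j0: "j0 < n" "\<rho> j0 \<notin> val_ideal v (w z + 1)"
      using P_lemma[OF z] unfolding \<rho>_def by blast
    have ue: "u $$ (l, j0) = (u - 1\<^sub>m n) $$ (l, j0) + (if l = j0 then 1 else 0)" if "l < n" for l
      using u(1) that j0 by simp
    have "(\<Sum>l<n. \<rho> l * u $$ (l, j0)) = (\<Sum>l<n. \<rho> l * (u - 1\<^sub>m n) $$ (l, j0) + \<rho> l * (if l = j0 then 1 else 0))"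
    proof (rule sum.cong)
      fix l assume "l \<in> {..<n}"
      then show "\<rho> l * u $$ (l, j0) = \<rho> l * (u - 1\<^sub>m n) $$ (l, j0) + \<rho> l * (if l = j0 then 1 else 0)"
        by (subst ue) (auto simp: distrib_left)
    qed simp
    also have "\<dots> = (\<Sum>l<n. \<rho> l * (u - 1\<^sub>m n) $$ (l, j0)) + (\<Sum>l<n. \<rho> l * (if l = j0 then 1 else 0))"
      by (rule sum.distrib)
    also have "(\<Sum>l<n. \<rho> l * (if l = j0 then 1 else 0)) = (\<Sum>l<n. if l = j0 then \<rho> l else 0)"
      by (rule sum.cong) auto
    also have "\<dots> = \<rho> j0" using j0 by simp
    finally have eq: "\<rho> j0 = (\<Sum>l<n. \<rho> l * u $$ (l, j0)) - (\<Sum>l<n. \<rho> l * (u - 1\<^sub>m n) $$ (l, j0))" by simp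
    have a: "(\<Sum>l<n. \<rho> l * u $$ (l, j0)) \<in> val_ideal v (w z + 1)"
      unfolding \<rho>_def by (rule vi_mono[OF dvv, of _ q]) (use h j0 False in auto)
    have b: "(\<Sum>l<n. \<rho> l * (u - 1\<^sub>m n) $$ (l, j0)) \<in> val_ideal v (w z + 1)"
      by (intro vi_sum[OF dvv] vi_mult[OF dvv] \<rho>t u(2)[rule_format] j0) auto
    have "\<rho> j0 \<in> val_ideal v (w z + 1)" unfolding eq by (rule vi_diff[OF dvv a b])
    then show ?thesis using j0(2) by simp
  qed
qed

end


context UM begin

lemma Ucong_D: "u \<in> Ucong v n q \<Longrightarrow> u \<in> carrier_mat n n \<and> (\<forall>i<n. \<forall>j<n. (u - 1\<^sub>m n) $$ (i, j) \<in> val_ideal v (int q))"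
  by (simp add: Ucong_def)

lemma u_entry: "(u::'a mat) \<in> carrier_mat n n \<Longrightarrow> l < n \<Longrightarrow> j < n \<Longrightarrow> u $$ (l, j) = (u - 1\<^sub>m n) $$ (l, j) + (if l = j then 1 else 0)"
  by simp

lemma emb_entry_split: "i < n \<Longrightarrow> l < n \<Longrightarrow> emb x $$ (i, l) = (if i = l then 1 else 0) + co ((x - 1) * \<alpha>^l) i"
proof -
  assume i: "i < n" and l: "l < n"
  have "x * \<alpha>^l = \<alpha>^l + (x - 1) * \<alpha>^l" by (simp add: algebra_simps)
  then show ?thesis using emb_entry[OF i l] co_add[OF i] co_alpha[OF l i] by simp
qed

lemma sum_delta_left: "i < n \<Longrightarrow> (\<Sum>l<n. (if i = l then 1 else 0) * (f l::'a)) = f i"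
proof -
  assume i: "i < n"
  have "(\<Sum>l<n. (if i = l then 1 else 0) * f l) = (\<Sum>l<n. if i = l then f l else 0)"
    by (rule sum.cong) auto
  then show ?thesis using i by simp
qed

lemma sum_if_left: "i < n \<Longrightarrow> (\<Sum>p<n. (if i = p then a else 0) * (g p::'a)) = a * g i"
proof -
  assume i: "i < n"
  have "(\<Sum>p<n. (if i = p then a else 0) * g p) = (\<Sum>p<n. if i = p then a * g p else 0)"
    by (rule sum.cong) auto
  then show ?thesis using i by simp
qed

lemma sum_if_right: "j < n \<Longrightarrow> (\<Sum>p<n. (g p::'a) * (if p = j then a else 0)) = g j * a"
proof -
  assume j: "j < n"
  have "(\<Sum>p<n. g p * (if p = j then a else 0)) = (\<Sum>p<n. if j = p then g p * a else 0)"
    by (rule sum.cong) auto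
  then show ?thesis using j by simp
qed

lemma row_split: "i < n \<Longrightarrow> (\<Sum>l<n. emb x $$ (i, l) * (u::'a mat) $$ (l, j)) =
   (\<Sum>l<n. (if i = l then 1 else 0) * u $$ (l, j)) + (\<Sum>l<n. co ((x - 1) * \<alpha>^l) i * u $$ (l, j))"
proof -
  assume i: "i < n"
  have "(\<Sum>l<n. emb x $$ (i, l) * u $$ (l, j)) = (\<Sum>l<n. (if i = l then 1 else 0) * u $$ (l, j) + co ((x - 1) * \<alpha>^l) i * u $$ (l, j))"
    by (rule sum.cong) (simp_all add: emb_entry_split[OF i] distrib_right)
  then show ?thesis by (simp add: sum.distrib)
qed

lemma M_lemma:
  assumes u: "u \<in> Ucong v n q0" and q0: "1 \<le> q0" and q: "q \<le> int q0"
    and last: "\<forall>j<n. (emb x * u) $$ (n-1, j) - (if j = n-1 then 1 else 0) \<in> val_ideal v q"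
  shows "x - 1 \<in> val_ideal w q"
proof -
  have uc: "u \<in> carrier_mat n n" and u1: "\<forall>i<n. \<forall>j<n. (u - 1\<^sub>m n) $$ (i, j) \<in> val_ideal v (int q0)"
    using Ucong_D[OF u] by auto
  have nn: "n - 1 < n" using n2 by simp
  show ?thesis
  proof (rule G_lemma[OF uc])
    have q01: "(1::int) \<le> int q0" using q0 by simp
    show "\<forall>l<n. \<forall>j<n. (u - 1\<^sub>m n) $$ (l, j) \<in> val_ideal v 1"
      using u1 vi_mono[OF dvv q01] by blast
    show "\<forall>j<n. (\<Sum>l<n. co ((x - 1) * \<alpha>^l) (n-1) * u $$ (l, j)) \<in> val_ideal v q"
    proof (intro allI impI)
      fix j assume j: "j < n"
      have "(emb x * u) $$ (n-1, j) = (\<Sum>l<n. emb x $$ (n-1, l) * u $$ (l, j))"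
        by (rule mult_entry[OF emb_carrier uc nn j])
      also have "\<dots> = (\<Sum>l<n. (if n-1 = l then 1 else 0) * u $$ (l, j)) + (\<Sum>l<n. co ((x - 1) * \<alpha>^l) (n-1) * u $$ (l, j))"
        by (rule row_split[OF nn])
      also have "(\<Sum>l<n. (if n-1 = l then 1 else 0) * u $$ (l, j)) = u $$ (n-1, j)"
        using sum_delta_left[OF nn, of "\<lambda>l. u $$ (l, j)"] by simp
      finally have e: "(\<Sum>l<n. co ((x - 1) * \<alpha>^l) (n-1) * u $$ (l, j)) =
          ((emb x * u) $$ (n-1, j) - (if j = n-1 then 1 else 0)) - (u $$ (n-1, j) - (if j = n-1 then 1 else 0))"
        by simp
      have "u $$ (n-1, j) - (if j = n-1 then 1 else 0) = (u - 1\<^sub>m n) $$ (n-1, j)"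
        using uc nn j by auto
      moreover have "(u - 1\<^sub>m n) $$ (n-1, j) \<in> val_ideal v q"
        using u1 nn j vi_mono[OF dvv q] by blast
      ultimately have uf: "u $$ (n-1, j) - (if j = n-1 then 1 else 0) \<in> val_ideal v q" by simp
      have lf: "(emb x * u) $$ (n-1, j) - (if j = n-1 then 1 else 0) \<in> val_ideal v q"
        using last j by blast
      show "(\<Sum>l<n. co ((x - 1) * \<alpha>^l) (n-1) * u $$ (l, j)) \<in> val_ideal v q"
        unfolding e by (rule vi_diff[OF dvv lf uf])
    qed
  qed
qed

lemma C_lemma:
  assumes x: "x - 1 \<in> val_ideal w (int q)" and u: "u \<in> Ucong v n q"
  shows "emb x * u \<in> Ucong v n q"
proof -
  have uc: "u \<in> carrier_mat n n" and u1: "\<forall>i<n. \<forall>j<n. (u - 1\<^sub>m n) $$ (i, j) \<in> val_ideal v (int q)"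
    using Ucong_D[OF u] by auto
  have pc: "emb x * u \<in> carrier_mat n n" by (rule mult_carrier_mat[OF emb_carrier uc])
  have u0: "u $$ (l, j) \<in> val_ideal v 0" if "l < n" "j < n" for l j
  proof -
    have le: "(0::int) \<le> int q" by simp
    have a: "(u - 1\<^sub>m n) $$ (l, j) \<in> val_ideal v 0" using u1 that vi_mono[OF dvv le] by blast
    have b: "(if l = j then 1 else 0) \<in> val_ideal v 0" by (simp add: vi_one0[OF dvv])
    show ?thesis by (subst u_entry[OF uc that]) (rule vi_add[OF dvv a b])
  qed
  have "(emb x * u - 1\<^sub>m n) $$ (i, j) \<in> val_ideal v (int q)" if i: "i < n" and j: "j < n" for i j
  proof -
    have "(emb x * u) $$ (i, j) = (\<Sum>l<n. emb x $$ (i, l) * u $$ (l, j))"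
      by (rule mult_entry[OF emb_carrier uc i j])
    also have "\<dots> = (\<Sum>l<n. (if i = l then 1 else 0) * u $$ (l, j)) + (\<Sum>l<n. co ((x - 1) * \<alpha>^l) i * u $$ (l, j))"
      by (rule row_split[OF i])
    also have "(\<Sum>l<n. (if i = l then 1 else 0) * u $$ (l, j)) = u $$ (i, j)"
      using sum_delta_left[OF i, of "\<lambda>l. u $$ (l, j)"] by simp
    finally have e: "(emb x * u - 1\<^sub>m n) $$ (i, j) = (u - 1\<^sub>m n) $$ (i, j) + (\<Sum>l<n. co ((x - 1) * \<alpha>^l) i * u $$ (l, j))"
      using pc uc i j by simp
    have s: "(\<Sum>l<n. co ((x - 1) * \<alpha>^l) i * u $$ (l, j)) \<in> val_ideal v (int q)"
    proof (rule vi_sum[OF dvv])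
      fix l assume l: "l \<in> {..<n}"
      have "(x - 1) * \<alpha>^l \<in> val_ideal w (int q)" using vi_mult0'[OF dvw x alpha_pow_vi] .
      then have "co ((x - 1) * \<alpha>^l) i \<in> val_ideal v (int q)" using co_vi i by blast
      then show "co ((x - 1) * \<alpha>^l) i * u $$ (l, j) \<in> val_ideal v (int q)"
        using vi_mult0'[OF dvv _ u0] l j by blast
    qed simp
    show ?thesis unfolding e using u1 i j s by (intro vi_add[OF dvv]) auto
  qed
  then show ?thesis using pc by (simp add: Ucong_def)
qed

lemma diag_left: "k \<in> carrier_mat n n \<Longrightarrow> i < n \<Longrightarrow> l < n \<Longrightarrow>
  (Sigma_mat \<omega> n m * k) $$ (i, l) = \<omega> ^ ((m + 1) * (n - 1 - i)) * k $$ (i, l)"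
proof -
  assume k: "k \<in> carrier_mat n n" and i: "i < n" and l: "l < n"
  have "(Sigma_mat \<omega> n m * k) $$ (i, l) = (\<Sum>p<n. Sigma_mat \<omega> n m $$ (i, p) * k $$ (p, l))"
    by (rule mult_entry[OF _ k i l]) (simp add: Sigma_mat_def)
  also have "\<dots> = (\<Sum>p<n. (if i = p then \<omega> ^ ((m + 1) * (n - 1 - i)) else 0) * k $$ (p, l))"
    by (rule sum.cong) (auto simp: Sigma_mat_def i)
  also have "\<dots> = \<omega> ^ ((m + 1) * (n - 1 - i)) * k $$ (i, l)" by (rule sum_if_left[OF i])
  finally show ?thesis .
qed

lemma diag_right: "k \<in> carrier_mat n n \<Longrightarrow> i < n \<Longrightarrow> j < n \<Longrightarrow>
  (k * Sigma_inv \<omega> n m) $$ (i, j) = k $$ (i, j) * inverse (\<omega> ^ ((m + 1) * (n - 1 - j)))"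
proof -
  assume k: "k \<in> carrier_mat n n" and i: "i < n" and j: "j < n"
  have "(k * Sigma_inv \<omega> n m) $$ (i, j) = (\<Sum>p<n. k $$ (i, p) * Sigma_inv \<omega> n m $$ (p, j))"
    by (rule mult_entry[OF k _ i j]) (simp add: Sigma_inv_def)
  also have "\<dots> = (\<Sum>p<n. k $$ (i, p) * (if p = j then inverse (\<omega> ^ ((m + 1) * (n - 1 - j))) else 0))"
    by (rule sum.cong) (auto simp: Sigma_inv_def j)
  also have "\<dots> = k $$ (i, j) * inverse (\<omega> ^ ((m + 1) * (n - 1 - j)))" by (rule sum_if_right[OF j])
  finally show ?thesis .
qed

lemma K_lemma:
  assumes h: "h \<in> Kprime v \<omega> n m"
  shows "h \<in> carrier_mat n n \<and> (\<forall>j<n. h $$ (n-1, j) - (if j = n-1 then 1 else 0) \<in> val_ideal v (int (m+1)))"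
proof -
  obtain k where hk: "h = Sigma_mat \<omega> n m * k * Sigma_inv \<omega> n m" and k: "k \<in> Kmirab v n (n * (m + 1))"
    using h unfolding Kprime_def by blast
  have kc: "k \<in> carrier_mat n n" using k unfolding Kmirab_def Kmax_def by blast
  have klast: "\<forall>j<n - 1. k $$ (n - 1, j) \<in> val_ideal v (int (n * (m + 1)))"
    "k $$ (n - 1, n - 1) - 1 \<in> val_ideal v (int (n * (m + 1)))"
    using k unfolding Kmirab_def by auto
  have sc: "Sigma_mat \<omega> n m \<in> carrier_mat n n" "Sigma_inv \<omega> n m \<in> carrier_mat n n"
    by (auto simp: Sigma_mat_def Sigma_inv_def)
  have skc: "Sigma_mat \<omega> n m * k \<in> carrier_mat n n" using sc kc by simp
  have hc: "h \<in> carrier_mat n n" using hk skc sc by simp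
  have nn: "n - 1 < n" using n2 by simp
  have ent: "h $$ (n-1, j) = k $$ (n-1, j) * inverse (\<omega> ^ ((m + 1) * (n - 1 - j)))" if j: "j < n" for j
    unfolding hk using diag_right[OF skc nn j] diag_left[OF kc nn j] by simp
  have "h $$ (n-1, j) - (if j = n-1 then 1 else 0) \<in> val_ideal v (int (m+1))" if j: "j < n" for j
  proof (cases "j = n - 1")
    case True
    then have eqk: "h $$ (n-1, j) - (if j = n-1 then 1 else 0) = k $$ (n - 1, n - 1) - 1"
      using ent[OF j] by simp
    have le: "int (m+1) \<le> int (n * (m + 1))"
    proof -
      have "1 * (m+1) \<le> n * (m+1)" using n2 by (intro mult_le_mono1) simp
      then have "m+1 \<le> n * (m+1)" by simp
      then show ?thesis by (simp only: of_nat_le_iff)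
    qed
    show ?thesis unfolding eqk by (rule vi_mono[OF dvv le klast(2)])
  next
    case False
    then have jl: "j < n - 1" using j by simp
    define e where "e = (m + 1) * (n - 1 - j)"
    have einv: "inverse (\<omega> ^ e) \<in> val_ideal v (- int e)"
      using vi_iff[OF dvv, of "inverse (\<omega> ^ e)"] om_nz dv_inverse[OF dvv, of "\<omega>^e"]
        dv_power[OF dvv om_nz, of e] v_om by simp
    have hin: "h $$ (n-1, j) \<in> val_ideal v (int (n * (m + 1)) + - int e)"
      using ent[OF j] vi_mult[OF dvv klast(1)[rule_format, OF jl] einv] unfolding e_def by simp
    have "e + (m + 1) \<le> n * (m + 1)"
    proof -
      have "n - 1 - j + 1 \<le> n" using jl by simp
      then have "(m + 1) * (n - 1 - j + 1) \<le> (m + 1) * n" by (rule mult_le_mono2)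
      then show ?thesis unfolding e_def by (simp add: algebra_simps)
    qed
    then have le2: "int (m+1) \<le> int (n * (m + 1)) + - int e" by linarith
    have "h $$ (n-1, j) \<in> val_ideal v (int (m+1))" by (rule vi_mono[OF dvv le2 hin])
    then show ?thesis using False by simp
  qed
  then show ?thesis using hc by blast
qed

end


context UM begin

lemma last_weak: "h \<in> Kprime v \<omega> n m \<Longrightarrow> q \<le> int (m+1) \<Longrightarrow>
   \<forall>j<n. h $$ (n-1, j) - (if j = n-1 then 1 else 0) \<in> val_ideal v q"
proof -
  assume hK: "h \<in> Kprime v \<omega> n m" and q: "q \<le> int (m+1)"
  have H: "\<forall>j<n. h $$ (n-1, j) - (if j = n-1 then 1 else 0) \<in> val_ideal v (int (m+1))"
    using K_lemma[OF hK] by (rule conjunct2)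
  show ?thesis
  proof (intro allI impI)
    fix j assume "j < n"
    then show "h $$ (n-1, j) - (if j = n-1 then 1 else 0) \<in> val_ideal v q"
      using vi_mono[OF dvv q] H by simp
  qed
qed

lemma in_onepE1: "1\<^sub>m n \<in> onepE w \<iota> \<omega> n m \<beta>"
  unfolding onepE_def by (rule image_eqI[where x = 1]) (simp_all add: emb_one)

lemma one_mult: "(h::'a mat) \<in> carrier_mat n n \<Longrightarrow> h = 1\<^sub>m n * h" by simp

lemma onepE_nz: "x - 1 \<in> val_ideal w 1 \<Longrightarrow> x \<noteq> 0"
proof
  assume x: "x - 1 \<in> val_ideal w 1" and x0: "x = 0"
  have "- (x - 1) \<in> val_ideal w 1" by (rule vi_uminus[OF dvw x])
  then have "(1::'b) \<in> val_ideal w 1" using x0 by simp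
  then show False using vi_one_not[OF dvw, of 1] by simp
qed

lemma smE: "a \<in> set_mult (onepE w \<iota> \<omega> n m \<beta>) U \<Longrightarrow>
   (\<And>y u. a = emb y * u \<Longrightarrow> y - 1 \<in> val_ideal w 1 \<Longrightarrow> u \<in> U \<Longrightarrow> P) \<Longrightarrow> P"
  unfolding set_mult_def onepE_def by auto

lemma smI: "y - 1 \<in> val_ideal w 1 \<Longrightarrow> u \<in> U \<Longrightarrow> emb y * u \<in> set_mult (onepE w \<iota> \<omega> n m \<beta>) U"
  unfolding set_mult_def onepE_def by auto

lemma smI1: "u \<in> U \<Longrightarrow> U \<subseteq> carrier_mat n n \<Longrightarrow> u \<in> set_mult (onepE w \<iota> \<omega> n m \<beta>) U"
proof -
  assume u: "u \<in> U" and U: "U \<subseteq> carrier_mat n n"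
  have "emb 1 * u \<in> set_mult (onepE w \<iota> \<omega> n m \<beta>) U" by (rule smI[OF _ u]) simp
  moreover have "emb 1 * u = u" unfolding emb_one using U u by auto
  ultimately show ?thesis by simp
qed

lemma smEu: "a \<in> set_mult (Eunits \<iota> \<omega> n m \<beta>) U \<Longrightarrow>
   (\<And>y u. a = emb y * u \<Longrightarrow> u \<in> U \<Longrightarrow> P) \<Longrightarrow> P"
  unfolding set_mult_def Eunits_def by auto

lemma smIu: "y \<noteq> 0 \<Longrightarrow> u \<in> U \<Longrightarrow> emb y * u \<in> set_mult (Eunits \<iota> \<omega> n m \<beta>) U"
  unfolding set_mult_def Eunits_def by auto

lemma smE2: "h \<in> set_mult A B \<Longrightarrow> (\<And>a b. h = a * b \<Longrightarrow> a \<in> A \<Longrightarrow> b \<in> B \<Longrightarrow> P) \<Longrightarrow> P"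
  unfolding set_mult_def by auto

lemma smI2: "a \<in> A \<Longrightarrow> b \<in> B \<Longrightarrow> a * b \<in> set_mult A B"
  unfolding set_mult_def by auto

lemma Ucong_sub: "Ucong v n q \<subseteq> carrier_mat n n" by (auto simp: Ucong_def)

end

theorem lemma6p5:
  fixes v :: "'a::field \<Rightarrow> int" and \<omega> :: 'a
    and w :: "'b::field \<Rightarrow> int" and \<iota> :: "'a \<Rightarrow> 'b" and \<beta> :: 'b
    and n m :: nat
  assumes "unramified_minimax v \<omega> w \<iota> n m \<beta>"
  shows "(H1 v w \<iota> \<omega> n m \<beta> \<inter> Kprime v \<omega> n m = Ucong v n (m div 2 + 1) \<inter> Kprime v \<omega> n m) \<and>
         (set_mult (Uupper n \<inter> J1 v w \<iota> \<omega> n m \<beta>) (H1 v w \<iota> \<omega> n m \<beta>) \<inter> Kprime v \<omega> n m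
         = set_mult (Uupper n \<inter> Ucong v n ((m + 1) div 2)) (Ucong v n (m div 2 + 1)) \<inter> Kprime v \<omega> n m) \<and>
         (Jbold v \<iota> \<omega> n m \<beta> \<inter> Kprime v \<omega> n m = J1 v w \<iota> \<omega> n m \<beta> \<inter> Kprime v \<omega> n m)"
proof -
  interpret UM v \<omega> w \<iota> n m \<beta> by unfold_locales (rule assms)
  define s where "s = m div 2 + 1"
  define r where "r = (m + 1) div 2"
  have s1: "1 \<le> s" and r1: "1 \<le> r" and sm: "int s \<le> int (m+1)" and rm: "int r \<le> int (m+1)"
    using m1 unfolding s_def r_def by auto
  have nn: "n - 1 < n" using n2 by simp
  have Uc: "u \<in> Ucong v n q \<Longrightarrow> u \<in> carrier_mat n n" for u q by (simp add: Ucong_def)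
  have H1eq: "H1 v w \<iota> \<omega> n m \<beta> = set_mult (onepE w \<iota> \<omega> n m \<beta>) (Ucong v n s)"
    by (simp add: H1_def s_def)
  have J1eq: "J1 v w \<iota> \<omega> n m \<beta> = set_mult (onepE w \<iota> \<omega> n m \<beta>) (Ucong v n r)"
    by (simp add: J1_def r_def)
  have Jbeq: "Jbold v \<iota> \<omega> n m \<beta> = set_mult (Eunits \<iota> \<omega> n m \<beta>) (Ucong v n r)"
    by (simp add: Jbold_def r_def)
  have part1: "H1 v w \<iota> \<omega> n m \<beta> \<inter> Kprime v \<omega> n m = Ucong v n s \<inter> Kprime v \<omega> n m"
  proof (intro equalityI subsetI)
    fix h assume "h \<in> H1 v w \<iota> \<omega> n m \<beta> \<inter> Kprime v \<omega> n m"
    then have hH: "h \<in> set_mult (onepE w \<iota> \<omega> n m \<beta>) (Ucong v n s)" and hK: "h \<in> Kprime v \<omega> n m"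
      unfolding H1eq by auto
    obtain x u where h: "h = emb x * u" and x: "x - 1 \<in> val_ideal w 1" and u: "u \<in> Ucong v n s"
      by (rule smE[OF hH])
    have "x - 1 \<in> val_ideal w (int s)"
      by (rule M_lemma[OF u s1 order_refl]) (use last_weak[OF hK sm] h in simp)
    then have "h \<in> Ucong v n s" unfolding h by (rule C_lemma[OF _ u])
    then show "h \<in> Ucong v n s \<inter> Kprime v \<omega> n m" using hK by simp
  next
    fix h assume h: "h \<in> Ucong v n s \<inter> Kprime v \<omega> n m"
    then have "h \<in> H1 v w \<iota> \<omega> n m \<beta>"
      unfolding H1eq using smI1[OF _ Ucong_sub] by auto
    then show "h \<in> H1 v w \<iota> \<omega> n m \<beta> \<inter> Kprime v \<omega> n m" using h by simp
  qed
  have part2: "set_mult (Uupper n \<inter> J1 v w \<iota> \<omega> n m \<beta>) (H1 v w \<iota> \<omega> n m \<beta>) \<inter> Kprime v \<omega> n m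
         = set_mult (Uupper n \<inter> Ucong v n r) (Ucong v n s) \<inter> Kprime v \<omega> n m"
  proof (intro equalityI subsetI)
    fix h assume "h \<in> set_mult (Uupper n \<inter> J1 v w \<iota> \<omega> n m \<beta>) (H1 v w \<iota> \<omega> n m \<beta>) \<inter> Kprime v \<omega> n m"
    then have hS: "h \<in> set_mult (Uupper n \<inter> J1 v w \<iota> \<omega> n m \<beta>) (H1 v w \<iota> \<omega> n m \<beta>)"
      and hK: "h \<in> Kprime v \<omega> n m" by auto
    obtain a b where hab: "h = a * b" and aUJ: "a \<in> Uupper n \<inter> J1 v w \<iota> \<omega> n m \<beta>"
      and bH: "b \<in> H1 v w \<iota> \<omega> n m \<beta>" by (rule smE2[OF hS])
    have aU: "a \<in> Uupper n" and aJ: "a \<in> set_mult (onepE w \<iota> \<omega> n m \<beta>) (Ucong v n r)"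
      using aUJ J1eq by auto
    obtain y u' where a: "a = emb y * u'" and y: "y - 1 \<in> val_ideal w 1" and u': "u' \<in> Ucong v n r"
      by (rule smE[OF aJ])
    have bH': "b \<in> set_mult (onepE w \<iota> \<omega> n m \<beta>) (Ucong v n s)" using bH H1eq by simp
    obtain x u where b: "b = emb x * u" and x: "x - 1 \<in> val_ideal w 1" and u: "u \<in> Ucong v n s"
      by (rule smE[OF bH'])
    have ac: "a \<in> carrier_mat n n" and arow: "\<And>l. l < n \<Longrightarrow> a $$ (n-1, l) = (if n - 1 = l then 1 else 0)"
      using aU nn unfolding Uupper_def by auto
    have bc: "b \<in> carrier_mat n n" unfolding b by (rule mult_carrier_mat[OF emb_carrier Uc[OF u]])
    have hb: "h $$ (n-1, j) = b $$ (n-1, j)" if j: "j < n" for j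
    proof -
      have "h $$ (n-1, j) = (\<Sum>l<n. a $$ (n-1, l) * b $$ (l, j))"
        unfolding hab by (rule mult_entry[OF ac bc nn j])
      also have "\<dots> = (\<Sum>l<n. (if n - 1 = l then 1 else 0) * b $$ (l, j))"
      proof (rule sum.cong)
        fix l assume "l \<in> {..<n}"
        then show "a $$ (n-1, l) * b $$ (l, j) = (if n - 1 = l then 1 else 0) * b $$ (l, j)"
          using arow[of l] by simp
      qed simp
      also have "\<dots> = b $$ (n-1, j)" using sum_delta_left[OF nn, of "\<lambda>l. b $$ (l, j)"] by simp
      finally show ?thesis .
    qed
    have "x - 1 \<in> val_ideal w (int s)"
      by (rule M_lemma[OF u s1 order_refl]) (use last_weak[OF hK sm] hb b in simp)
    then have bU: "b \<in> Ucong v n s" unfolding b by (rule C_lemma[OF _ u])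
    have "y - 1 \<in> val_ideal w (int r)"
      by (rule M_lemma[OF u' r1 order_refl]) (use arow a in simp)
    then have aU': "a \<in> Ucong v n r" unfolding a by (rule C_lemma[OF _ u'])
    show "h \<in> set_mult (Uupper n \<inter> Ucong v n r) (Ucong v n s) \<inter> Kprime v \<omega> n m"
      using hab smI2[of a "Uupper n \<inter> Ucong v n r" b "Ucong v n s"] aU aU' bU hK by simp
  next
    fix h assume "h \<in> set_mult (Uupper n \<inter> Ucong v n r) (Ucong v n s) \<inter> Kprime v \<omega> n m"
    then have hS: "h \<in> set_mult (Uupper n \<inter> Ucong v n r) (Ucong v n s)"
      and hK: "h \<in> Kprime v \<omega> n m" by auto
    obtain a b where hab: "h = a * b" and aUr: "a \<in> Uupper n \<inter> Ucong v n r"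
      and bs: "b \<in> Ucong v n s" by (rule smE2[OF hS])
    have "a \<in> J1 v w \<iota> \<omega> n m \<beta>"
      unfolding J1eq using smI1[OF _ Ucong_sub] aUr by auto
    moreover have "b \<in> H1 v w \<iota> \<omega> n m \<beta>"
      unfolding H1eq using smI1[OF _ Ucong_sub] bs by auto
    ultimately show "h \<in> set_mult (Uupper n \<inter> J1 v w \<iota> \<omega> n m \<beta>) (H1 v w \<iota> \<omega> n m \<beta>) \<inter> Kprime v \<omega> n m"
      using hab smI2[of a "Uupper n \<inter> J1 v w \<iota> \<omega> n m \<beta>" b "H1 v w \<iota> \<omega> n m \<beta>"] aUr hK by simp
  qed
  have part3: "Jbold v \<iota> \<omega> n m \<beta> \<inter> Kprime v \<omega> n m = J1 v w \<iota> \<omega> n m \<beta> \<inter> Kprime v \<omega> n m"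
  proof (intro equalityI subsetI)
    fix h assume "h \<in> Jbold v \<iota> \<omega> n m \<beta> \<inter> Kprime v \<omega> n m"
    then have hJ: "h \<in> set_mult (Eunits \<iota> \<omega> n m \<beta>) (Ucong v n r)" and hK: "h \<in> Kprime v \<omega> n m"
      unfolding Jbeq by auto
    obtain x u where h: "h = emb x * u" and u: "u \<in> Ucong v n r" by (rule smEu[OF hJ])
    have "x - 1 \<in> val_ideal w 1"
      using M_lemma[OF u r1, of 1 x] last_weak[OF hK, of 1] h r1 by simp
    then have "h \<in> J1 v w \<iota> \<omega> n m \<beta>"
      unfolding J1eq h by (rule smI[OF _ u])
    then show "h \<in> J1 v w \<iota> \<omega> n m \<beta> \<inter> Kprime v \<omega> n m" using hK by simp
  next
    fix h assume "h \<in> J1 v w \<iota> \<omega> n m \<beta> \<inter> Kprime v \<omega> n m"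
    then have hJ: "h \<in> set_mult (onepE w \<iota> \<omega> n m \<beta>) (Ucong v n r)" and hK: "h \<in> Kprime v \<omega> n m"
      unfolding J1eq by auto
    obtain x u where h: "h = emb x * u" and x: "x - 1 \<in> val_ideal w 1" and u: "u \<in> Ucong v n r"
      by (rule smE[OF hJ])
    have "h \<in> Jbold v \<iota> \<omega> n m \<beta>"
      unfolding Jbeq h by (rule smIu[OF onepE_nz[OF x] u])
    then show "h \<in> Jbold v \<iota> \<omega> n m \<beta> \<inter> Kprime v \<omega> n m" using hK by simp
  qed
  show ?thesis using part1 part2 part3 unfolding s_def r_def by simp
qed


end
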